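(* For every $\theta\in[0,\pi)$, the set of minimisers of $\overline Q^{\,\theta}_T$ on $\mathbb{R}^2$ is exactly the segment $[\alpha^T_{\theta,1},\alpha^T_{\theta,2}]\times\{\beta_\theta\}$, where $$\beta_\theta:=\frac{kc_1}{2c}\sin2\theta,\qquad \alpha^T_{\theta,1}:=-\frac{kc_1}{2c}(1+\cos2\theta),\qquad \alpha^T_{\theta,2}:=\frac{kc_1}{2c}(1-\cos2\theta).$$ Moreover $\min_{\mathbb{R}^2}\overline Q^{\,\theta}_T=c_1k^2\big(2-\tfrac{c_1}{c}\big)+\bar e_T$.
   Context: Fix constants $c_1>0$, $c_2>0$, $c:=c_1+c_2$, $k>0$, $\bar e_T\ge0$, $\theta\in[0,\pi)$. Let $a_\theta=\cos2\theta$, $b_\theta=\sin2\theta$ and $\bar A^\theta_T:=k\begin{pmatrix}-a_\theta&b_\theta\\ b_\theta&a_\theta\end{pmatrix}$. For matrices $M\cdot N={\rm tr}(M^{\rm T}N)$, $|M|^2=M\cdot M$. For $M\in\mathbb{R}^{2\times2}_{\rm sym}$, $L^\theta_T(M):=-2c_1M\cdot\bar A^\theta_T+2c_1k^2+\bar e_T$. For $(\alpha,\beta)\in\mathbb{R}^2$, $$\overline Q^{\,\theta}_T(\alpha,\beta):=\min_{\gamma\in\mathbb{R}}\Big\{c|M|^2+2c|\det M|+L^\theta_T(M): M=\begin{pmatrix}\alpha&\beta\\ \beta&\gamma\end{pmatrix}\Big\}.$$ *)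

theory Defs
  imports "HOL-Analysis.Analysis"
begin

definition frob :: "real^2^2 \<Rightarrow> real^2^2 \<Rightarrow> real" where
  "frob M N = (\<Sum>i\<in>UNIV. \<Sum>j\<in>UNIV. M $ i $ j * N $ i $ j)"

definition frob_sq :: "real^2^2 \<Rightarrow> real" where
  "frob_sq M = frob M M"

definition symmat :: "real \<Rightarrow> real \<Rightarrow> real \<Rightarrow> real^2^2" where
  "symmat a b g = vector [vector [a, b], vector [b, g]]"

definition Abar :: "real \<Rightarrow> real \<Rightarrow> real^2^2" where
  "Abar k \<theta> = (\<chi> i j. k * (vector [vector [- cos (2*\<theta>), sin (2*\<theta>)],
                                     vector [sin (2*\<theta>), cos (2*\<theta>)]] :: real^2^2) $ i $ j)"

definition LT :: "real \<Rightarrow> real \<Rightarrow> real \<Rightarrow> real \<Rightarrow> real^2^2 \<Rightarrow> real" where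
  "LT c1 k eT \<theta> M = - 2 * c1 * frob M (Abar k \<theta>) + 2 * c1 * k^2 + eT"

text \<open>Qbar: the minimum over gamma (written as an infimum) with c = c1 + c2.\<close>
definition Qbar :: "real \<Rightarrow> real \<Rightarrow> real \<Rightarrow> real \<Rightarrow> real \<Rightarrow> real \<Rightarrow> real \<Rightarrow> real" where
  "Qbar c1 c2 k eT \<theta> \<alpha> \<beta> =
     (INF \<gamma>. (c1 + c2) * frob_sq (symmat \<alpha> \<beta> \<gamma>) + 2 * (c1 + c2) * \<bar>det (symmat \<alpha> \<beta> \<gamma>)\<bar>
             + LT c1 k eT \<theta> (symmat \<alpha> \<beta> \<gamma>))"

end

theory Submission
  imports Defs
begin
lemma frob_sym: "frob_sq (symmat a b g) = a^2 + 2*b^2 + g^2"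
  by (simp add: frob_sq_def frob_def symmat_def sum_2 power2_eq_square)
lemma det_sym: "det (symmat a b g) = a*g - b^2"
  by (simp add: det_2 symmat_def power2_eq_square)
lemma frob_A: "frob (symmat a b g) (Abar k x) = k * (- a * cos (2*x) + 2 * b * sin (2*x) + g * cos (2*x))"
  by (simp add: frob_def symmat_def Abar_def sum_2 algebra_simps)

lemma cs_ineq:
  assumes "C^2+S^2 = (1::real)"
  shows "(-a*C+2*b* S+g*C)^2 \<le> (g-a)^2 + 4*b^2"
proof -
  have "((g-a)^2 + 4*b^2)*(C^2+S^2) - (-a*C+2*b* S+g*C)^2 = ((g-a)* S - 2*b*C)^2"
    by algebra
  then show ?thesis using assms by (smt (verit) zero_le_power2 mult_cancel_left1)
qed

definition EE :: "real \<Rightarrow> real \<Rightarrow> real \<Rightarrow> real \<Rightarrow> real \<Rightarrow> real \<Rightarrow> real" where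
  "EE C S s a b g = a^2+2*b^2+g^2 + 2*\<bar>a*g-b^2\<bar> - 2 * s * (-a*C+2*b * S+g*C)"

lemma PT_le: "(g-a::real)^2 + 4*b^2 \<le> a^2+2*b^2+g^2 + 2*\<bar>a*g-b^2\<bar>"
proof -
  have "(g-a)^2 + 4*b^2 = a^2+2*b^2+g^2 - 2*(a*g-b^2)" by algebra
  moreover have "\<And>p q x::real. p = q - 2*x \<Longrightarrow> p \<le> q + 2*\<bar>x\<bar>" by arith
  ultimately show ?thesis by blast
qed

lemma core_bound:
  assumes "C^2+S^2 = (1::real)" "s > 0"
  shows "EE C S s a b g + s^2 \<ge> 0"
proof -
  define u where "u = -a*C+2*b * S+g*C"
  define T where "T = a^2+2*b^2+g^2 + 2*\<bar>a*g-b^2\<bar>"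
  have ET: "EE C S s a b g = T - 2 * s * u" unfolding EE_def T_def u_def by (rule refl)
  have "u^2 \<le> (g-a)^2 + 4*b^2" using cs_ineq[OF assms(1)] u_def by simp
  also have "\<dots> \<le> T" unfolding T_def by (rule PT_le)
  finally have uT: "u^2 \<le> T" .
  have T0: "T \<ge> 0" unfolding T_def by simp
  have "T - 2 * s * u + s^2 \<ge> 0"
  proof (cases "u \<le> 0")
    case True
    have "2 * s * u \<le> 0" using True assms(2) by (simp add: mult_nonneg_nonpos)
    then show ?thesis using T0 zero_le_power2[of s] by linarith
  next
    case False
    have "(u - s)^2 \<ge> 0" by simp
    moreover have "(u - s)^2 = u^2 - 2 * s * u + s^2" by algebra
    ultimately show ?thesis using uT by linarith
  qed
  then show ?thesis using ET by linarith
qed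

lemma core_eq:
  assumes "C^2+S^2 = (1::real)" "s > 0" "EE C S s a b g + s^2 = 0"
  shows "2*b = s * S \<and> g - a = s * C \<and> a*g \<le> b^2"
proof -
  define u where "u = -a*C+2*b * S+g*C"
  define P where "P = (g-a)^2 + 4*b^2"
  define T where "T = a^2+2*b^2+g^2 + 2*\<bar>a*g-b^2\<bar>"
  have ET: "EE C S s a b g = T - 2 * s * u" unfolding EE_def T_def u_def by (rule refl)
  have uP: "u^2 \<le> P" using cs_ineq[OF assms(1)] u_def P_def by simp
  have PT: "P \<le> T" unfolding T_def P_def by (rule PT_le)
  have E: "T - 2 * s * u + s^2 = 0" using assms(3) ET by linarith
  have "(u - s)^2 = u^2 - 2 * s * u + s^2" by algebra
  then have "(u - s)^2 \<le> 0" using uP PT E by linarith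
  then have us: "u = s" by simp
  have Ps: "P = s^2" and Ts: "T = s^2" using uP PT E us by (simp_all add: power2_eq_square)
  have P2: "P = a^2+2*b^2+g^2 - 2*(a*g-b^2)" unfolding P_def by algebra
  have "\<And>P q x s::real. P = s \<Longrightarrow> q + 2*\<bar>x\<bar> = s \<Longrightarrow> P = q - 2*x \<Longrightarrow> x \<le> 0" by arith
  from this[OF Ps Ts[unfolded T_def] P2] have ag: "a*g \<le> b^2" by simp
  have "(g - a - u*C)^2 + (2*b - u * S)^2 = P - 2*u*u + u^2*(C^2+S^2)"
    unfolding P_def u_def by algebra
  also have "\<dots> = 0" using assms(1) Ps us by (simp add: power2_eq_square)
  finally have h: "(g - a - u*C)^2 + (2*b - u * S)^2 = 0" .
  have "g - a - u*C = 0" using h zero_le_power2[of "g - a - u*C"] zero_le_power2[of "2*b - u * S"]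
    by (metis add_nonneg_eq_0_iff zero_eq_power2)
  moreover have "2*b - u * S = 0" using h zero_le_power2[of "g - a - u*C"] zero_le_power2[of "2*b - u * S"]
    by (metis add_nonneg_eq_0_iff zero_eq_power2)
  ultimately show ?thesis using us ag by simp
qed

lemma core_attain:
  assumes "C^2+S^2 = (1::real)" "s > 0" "2*b = s * S" "a*(a + s * C) \<le> b^2"
  shows "EE C S s a b (a + s * C) + s^2 = 0"
proof -
  have ab: "\<bar>a*(a+s * C)-b^2\<bar> = b^2 - a*(a+s * C)" using assms(4) by simp
  have bb: "b = s * S / 2" using assms(3) by simp
  have "EE C S s a b (a + s * C) = a^2+2*b^2+(a + s * C)^2 + 2*(b^2 - a*(a+s * C)) - 2 * s * (-a*C+2*b * S+(a + s * C)*C)"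
    unfolding EE_def ab by (rule refl)
  also have "\<dots> = s^2 * (C^2+S^2) - 2* s* s*(C^2+S^2)"
    using assms(3) by algebra
  finally show ?thesis using assms(1) by (simp add: power2_eq_square)
qed

lemma abs_lin: "\<bar>a*(C::real)\<bar> \<le> \<bar>a\<bar>" if "\<bar>C\<bar> \<le> 1" for a
  using mult_left_le[OF that, of "\<bar>a\<bar>"] by (simp add: abs_mult)

lemma EE_attain:
  assumes "\<bar>C\<bar> \<le> (1::real)" "\<bar>S\<bar> \<le> 1" "s > 0"
  shows "\<exists>g0. \<forall>g. EE C S s a b g0 \<le> EE C S s a b g"
proof -
  define f where "f = EE C S s a b"
  define K where "K = 2*b^2 + 4* s*(\<bar>a\<bar>+2*\<bar>b\<bar>)"
  define R where "R = 2* s + K + 1"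
  have K0: "K \<ge> 0" unfolding K_def using assms(3) by simp
  have cont: "continuous_on (cball 0 R) f" unfolding f_def EE_def by (intro continuous_intros)
  have "R \<ge> 0" unfolding R_def using K0 assms(3) by simp
  then have ne: "cball 0 R \<noteq> {}" by simp
  obtain x where x: "x \<in> cball 0 R" "\<forall>y\<in>cball 0 R. f x \<le> f y"
    using continuous_attains_inf[OF compact_cball ne cont] by blast
  have "0 \<in> cball (0::real) R" using \<open>R \<ge> 0\<close> by simp
  then have fx0: "f x \<le> f 0" using x by blast
  have ubd: "\<bar>-a*C+2*b* S+g*C\<bar> \<le> \<bar>a\<bar>+2*\<bar>b\<bar>+\<bar>g\<bar>" for g
  proof -
    have "\<bar>-a*C+2*b* S+g*C\<bar> \<le> \<bar>a*C\<bar> + 2*\<bar>b* S\<bar> + \<bar>g*C\<bar>"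
    proof -
      have t: "\<bar>-x + 2*y + z\<bar> \<le> \<bar>x\<bar> + 2*\<bar>y\<bar> + \<bar>z\<bar>" for x y z :: real by arith
      have "-a*C+2*b* S+g*C = -(a*C) + 2*(b* S) + g*C" by simp
      then show ?thesis using t[of "a*C" "b* S" "g*C"] by simp
    qed
    also have "\<dots> \<le> \<bar>a\<bar>+2*\<bar>b\<bar>+\<bar>g\<bar>" using abs_lin[OF assms(1)] abs_lin[OF assms(2)] by (smt (verit))
    finally show ?thesis .
  qed
  have low: "f g \<ge> a^2+2*b^2+g^2 - 2* s*(\<bar>a\<bar>+2*\<bar>b\<bar>+\<bar>g\<bar>)" for g
  proof -
    have "2* s*(-a*C+2*b* S+g*C) \<le> 2* s*(\<bar>a\<bar>+2*\<bar>b\<bar>+\<bar>g\<bar>)"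
      using ubd[of g] assms(3) by (intro mult_left_mono) (auto dest: abs_le_D1)
    moreover have "\<bar>a*g-b^2\<bar> \<ge> 0" by simp
    moreover have aux: "\<And>P X Y Z::real. X \<le> Y \<Longrightarrow> 0 \<le> Z \<Longrightarrow> P - Y \<le> P + 2*Z - X" by linarith
    ultimately show ?thesis unfolding f_def EE_def by blast
  qed
  have up: "f 0 \<le> a^2+4*b^2 + 2* s*(\<bar>a\<bar>+2*\<bar>b\<bar>)"
  proof -
    have "-(s*(-a*C+2*b* S)) \<le> s*(\<bar>a\<bar>+2*\<bar>b\<bar>)"
    proof -
      have "\<bar>-a*C+2*b* S+0*C\<bar> \<le> \<bar>a\<bar>+2*\<bar>b\<bar>+\<bar>0\<bar>" by (rule ubd)
      then have "-(-a*C+2*b* S) \<le> \<bar>a\<bar>+2*\<bar>b\<bar>" by simp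
      then show ?thesis using assms(3) by (metis minus_mult_right mult_left_mono less_imp_le)
    qed
    moreover have "\<bar>a*0-b^2\<bar> = b^2" by simp
    ultimately show ?thesis unfolding f_def EE_def by simp
  qed
  have "f x \<le> f y" for y
  proof (cases "y \<in> cball 0 R")
    case True then show ?thesis using x by blast
  next
    case False
    then have yR: "\<bar>y\<bar> \<ge> R" by (simp add: dist_real_def)
    have y2: "y^2 = \<bar>y\<bar>*\<bar>y\<bar>" by (simp add: power2_eq_square abs_mult_self_eq)
    have "\<bar>y\<bar>*R \<le> \<bar>y\<bar>*\<bar>y\<bar>" using yR by (intro mult_left_mono) auto
    moreover have "\<bar>y\<bar>*R = \<bar>y\<bar>*(2 * s) + \<bar>y\<bar>*(K+1)" unfolding R_def by (simp add: algebra_simps)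
    ultimately have "y^2 \<ge> \<bar>y\<bar>*(2 * s) + \<bar>y\<bar>*(K+1)" using y2 by linarith
    moreover have "\<bar>y\<bar>*(K+1) \<ge> 1*(K+1)"
      using yR K0 assms(3) unfolding R_def by (intro mult_right_mono) auto
    ultimately have "y^2 \<ge> 2* s*\<bar>y\<bar> + K + 1" by (simp add: algebra_simps)
    then have "f y \<ge> f 0" using low[of y] up unfolding K_def by (simp add: algebra_simps)
    then show ?thesis using fx0 by simp
  qed
  then show ?thesis unfolding f_def by blast
qed

lemma seg_iff:
  assumes "C^2 + S^2 = (1::real)" "s > 0"
  shows "a*(a + s*C) \<le> (s* S/2)^2 \<longleftrightarrow> -(s/2)*(1+C) \<le> a \<and> a \<le> (s/2)*(1-C)"
proof -
  have e: "a*(a + s*C) - (s* S/2)^2 = (a - (-(s/2)*(1+C))) * (a - (s/2)*(1-C))"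
    using assms(1) by (simp add: field_simps power2_eq_square) algebra
  have "(s/2)*(1-C) - (-(s/2)*(1+C)) = s" by (simp add: field_simps)
  then have le: "-(s/2)*(1+C) \<le> (s/2)*(1-C)" using assms(2) by linarith
  have "a*(a + s*C) \<le> (s* S/2)^2 \<longleftrightarrow> (a - (-(s/2)*(1+C))) * (a - (s/2)*(1-C)) \<le> 0"
    using e by linarith
  also have "\<dots> \<longleftrightarrow> -(s/2)*(1+C) \<le> a \<and> a \<le> (s/2)*(1-C)"
    using le by (auto simp: mult_le_0_iff)
  finally show ?thesis .
qed

lemma Fform_gen:
  fixes c c1 k eT X Y U :: real
  assumes "c > 0"
  shows "c*X + 2*c*Y + (- 2 * c1 * (k*U) + 2 * c1 * k^2 + eT)
       = c*((X + 2*Y - 2 * (2*(k*c1/(2*c))) * U) + (2*(k*c1/(2*c)))^2) + (c1 * k^2 * (2 - c1 / c) + eT)"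
  using assms by (simp add: field_simps power2_eq_square)

lemma Fform:
  fixes c1 c2 k eT \<theta> a b g :: real
  assumes "c1 + c2 > 0"
  shows "(c1 + c2) * frob_sq (symmat a b g) + 2 * (c1 + c2) * \<bar>det (symmat a b g)\<bar>
             + LT c1 k eT \<theta> (symmat a b g)
      = (c1+c2)*(EE (cos (2*\<theta>)) (sin (2*\<theta>)) (2*(k*c1/(2*(c1+c2)))) a b g + (2*(k*c1/(2*(c1+c2))))^2)
         + (c1 * k^2 * (2 - c1 / (c1+c2)) + eT)"
  unfolding frob_sym det_sym LT_def frob_A EE_def
  using Fform_gen[OF assms, of "a^2 + 2*b^2 + g^2" "\<bar>a*g-b^2\<bar>" c1 k "-a*cos (2*\<theta>)+2*b* sin (2*\<theta>)+g*cos (2*\<theta>)" eT]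
  by simp

theorem lemma3p3:
  fixes c1 c2 k eT \<theta> :: real
  assumes "c1 > 0" and "c2 > 0" and "k > 0" and "eT \<ge> 0"
    and "0 \<le> \<theta>" and "\<theta> < pi"
  defines "c \<equiv> c1 + c2"
  shows "{(\<alpha>, \<beta>). \<forall>\<alpha>' \<beta>'. Qbar c1 c2 k eT \<theta> \<alpha> \<beta> \<le> Qbar c1 c2 k eT \<theta> \<alpha>' \<beta>'}
           = {- (k * c1 / (2 * c)) * (1 + cos (2 * \<theta>)) .. (k * c1 / (2 * c)) * (1 - cos (2 * \<theta>))}
             \<times> {(k * c1 / (2 * c)) * sin (2 * \<theta>)}
       \<and> (INF p. Qbar c1 c2 k eT \<theta> (fst p) (snd p)) = c1 * k^2 * (2 - c1 / c) + eT"
proof -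
  define C where "C = cos (2*\<theta>)"
  define S where "S = sin (2*\<theta>)"
  define h where "h = k * c1 / (2 * c)"
  define s where "s = 2*h"
  define M where "M = c1 * k^2 * (2 - c1 / c) + eT"
  define Q where "Q = Qbar c1 c2 k eT \<theta>"
  have c0: "c > 0" unfolding c_def using assms by simp
  have h0: "h > 0" unfolding h_def using c0 assms by simp
  have s0: "s > 0" unfolding s_def using h0 by simp
  have CS: "C^2 + S^2 = 1" unfolding C_def S_def by simp
  have Cb: "\<bar>C\<bar> \<le> 1" unfolding C_def by simp
  have Sb: "\<bar>S\<bar> \<le> 1" unfolding S_def by simp
  have Qf: "Q a b = (INF g. c*(EE C S s a b g + s^2) + M)" for a b
    unfolding Q_def Qbar_def C_def S_def s_def h_def M_def c_def
    using Fform[of c1 c2] c0 c_def by simp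
  have Qmin: "\<exists>g0. Q a b = c*(EE C S s a b g0 + s^2) + M \<and> (\<forall>g. EE C S s a b g0 \<le> EE C S s a b g)" for a b
  proof -
    obtain g0 where g0: "\<forall>g. EE C S s a b g0 \<le> EE C S s a b g" using EE_attain[OF Cb Sb s0] by blast
    have "(INF g. c*(EE C S s a b g + s^2) + M) = c*(EE C S s a b g0 + s^2) + M"
    proof (rule cInf_eq_minimum)
      show "c*(EE C S s a b g0 + s^2) + M \<in> range (\<lambda>g. c*(EE C S s a b g + s^2) + M)" by (rule rangeI)
      fix x assume "x \<in> range (\<lambda>g. c*(EE C S s a b g + s^2) + M)"
      then obtain g where "x = c*(EE C S s a b g + s^2) + M" by blast
      then show "c*(EE C S s a b g0 + s^2) + M \<le> x" using g0 c0 by (simp add: mult_left_mono)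
    qed
    then show ?thesis using g0 Qf by auto
  qed
  have Qge: "Q a b \<ge> M" for a b
  proof -
    obtain g0 where "Q a b = c*(EE C S s a b g0 + s^2) + M" using Qmin by blast
    moreover have "EE C S s a b g0 + s^2 \<ge> 0" by (rule core_bound[OF CS s0])
    ultimately show ?thesis using c0 by simp
  qed
  have Qeq: "Q a b = M \<longleftrightarrow> (-h*(1+C) \<le> a \<and> a \<le> h*(1-C)) \<and> b = h* S" for a b
  proof -
    obtain g0 where g0: "Q a b = c*(EE C S s a b g0 + s^2) + M" "\<forall>g. EE C S s a b g0 \<le> EE C S s a b g"
      using Qmin by blast
    have sh: "s/2 = h" unfolding s_def by simp
    show ?thesis
    proof
      assume "Q a b = M"
      then have "EE C S s a b g0 + s^2 = 0" using g0(1) c0 by simp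
      from core_eq[OF CS s0 this] have e: "2*b = s * S" "g0 - a = s * C" "a*g0 \<le> b^2" by auto
      have bS: "b = s * S/2" using e(1) by simp
      have g0e: "g0 = a + s * C" using e(2) by simp
      have "a*(a + s * C) \<le> b^2" using e(3) unfolding g0e .
      then have "a*(a + s * C) \<le> (s * S/2)^2" unfolding bS .
      then have "-(s/2)*(1+C) \<le> a \<and> a \<le> (s/2)*(1-C)" using seg_iff[OF CS s0] by blast
      then show "(-h*(1+C) \<le> a \<and> a \<le> h*(1-C)) \<and> b = h* S" using bS sh by auto
    next
      assume A: "(-h*(1+C) \<le> a \<and> a \<le> h*(1-C)) \<and> b = h* S"
      then have bS: "b = s * S/2" using sh by auto
      have "-(s/2)*(1+C) \<le> a \<and> a \<le> (s/2)*(1-C)" using A sh by simp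
      then have "a*(a + s * C) \<le> (s * S/2)^2" using seg_iff[OF CS s0] by blast
      then have a2: "a*(a + s * C) \<le> b^2" unfolding bS .
      have b2: "2*b = s * S" using bS by simp
      have "EE C S s a b (a + s * C) + s^2 = 0" by (rule core_attain[OF CS s0 b2 a2])
      then have "EE C S s a b g0 + s^2 \<le> 0" using g0(2) by (metis add_le_cancel_right)
      moreover have "EE C S s a b g0 + s^2 \<ge> 0" by (rule core_bound[OF CS s0])
      ultimately show "Q a b = M" using g0(1) by simp
    qed
  qed
  define a0 where "a0 = -h*(1+C)"
  have a0: "-h*(1+C) \<le> a0 \<and> a0 \<le> h*(1-C)"
  proof -
    have "h*(1-C) - (-h*(1+C)) = 2*h" by (simp add: algebra_simps)
    then show ?thesis unfolding a0_def using h0 by linarith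
  qed
  have Q0: "Q a0 (h* S) = M" using Qeq[of a0 "h* S"] a0 by simp
  have set1: "{(\<alpha>, \<beta>). \<forall>\<alpha>' \<beta>'. Q \<alpha> \<beta> \<le> Q \<alpha>' \<beta>'} = {-h*(1+C) .. h*(1-C)} \<times> {h* S}"
  proof (rule set_eqI)
    fix p :: "real \<times> real"
    obtain a b where p: "p = (a,b)" by (cases p)
    have "(\<forall>\<alpha>' \<beta>'. Q a b \<le> Q \<alpha>' \<beta>') \<longleftrightarrow> Q a b = M"
    proof
      assume "\<forall>\<alpha>' \<beta>'. Q a b \<le> Q \<alpha>' \<beta>'"
      then have "Q a b \<le> Q a0 (h* S)" by blast
      then have "Q a b \<le> M" using Q0 by simp
      then show "Q a b = M" using Qge[of a b] by simp
    next
      assume "Q a b = M" then show "\<forall>\<alpha>' \<beta>'. Q a b \<le> Q \<alpha>' \<beta>'" using Qge by simp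
    qed
    then show "p \<in> {(\<alpha>, \<beta>). \<forall>\<alpha>' \<beta>'. Q \<alpha> \<beta> \<le> Q \<alpha>' \<beta>'} \<longleftrightarrow> p \<in> {-h*(1+C) .. h*(1-C)} \<times> {h* S}"
      using Qeq[of a b] p by auto
  qed
  have inf1: "(INF p. Q (fst p) (snd p)) = M"
  proof (rule cInf_eq_minimum)
    have "(\<lambda>p. Q (fst p) (snd p)) (a0, h* S) \<in> range (\<lambda>p. Q (fst p) (snd p))" by (rule rangeI)
    then show "M \<in> range (\<lambda>p. Q (fst p) (snd p))" using Q0 by simp
    fix x assume "x \<in> range (\<lambda>p. Q (fst p) (snd p))"
    then show "M \<le> x" using Qge by auto
  qed
  show ?thesis using set1 inf1 unfolding Q_def M_def h_def C_def S_def by simp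
qed

end
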